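(* Let $N\ge1$, $n,m\ge1$, $\kappa>0$, and let $\{(U_i,V_i)\}_{i=1}^N$ be a solution of $$\dot U_j=\frac{\kappa}{N}\sum_{k=1}^N\big(\langle V_j,V_k\rangle_FU_k-\langle V_k,V_j\rangle_FU_jU_k^\dagger U_j\big),\qquad \dot V_j=\frac{\kappa}{N}\sum_{k=1}^N\big(\langle U_j,U_k\rangle_FV_k-\langle U_k,U_j\rangle_FV_jV_k^\dagger V_j\big),$$ with $(U_j,V_j)(0)\in\mathbf U(n)\times\mathbf U(m)$. Then $\mathcal E(U,V):=1-\frac1{N^2}\sum_{i,j=1}^N\langle U_i,U_j\rangle_F\langle V_i,V_j\rangle_F$ satisfies, for $t>0$, $$\frac{d}{dt}\mathcal E(U,V)=-\frac{1}{\kappa N}\sum_{j=1}^N\big(\|\dot U_j\|_F^2+\|\dot V_j\|_F^2\big).$$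
   Context: $\langle A,B\rangle_F=\mathrm{tr}(A^\dagger B)$, $\|A\|_F=\sqrt{\langle A,A\rangle_F}$; $\mathbf U(n)$ denotes the unitary group. *)

theory Defs
  imports "HOL-Analysis.Analysis"
begin

definition adj :: "complex^'n^'n \<Rightarrow> complex^'n^'n" where
  "adj A = (\<chi> i j. cnj (A $ j $ i))"

definition mtrace :: "complex^'n^'n \<Rightarrow> complex" where
  "mtrace A = (\<Sum>i\<in>UNIV. A $ i $ i)"

definition frob_inner :: "complex^'n^'n \<Rightarrow> complex^'n^'n \<Rightarrow> complex" where
  "frob_inner A B = mtrace (adj A ** B)"

text \<open>Frobenius norm sqrt(<A,A>_F) (the inner product is real and nonnegative).\<close>
definition frob_norm :: "complex^'n^'n \<Rightarrow> real" where
  "frob_norm A = sqrt (Re (frob_inner A A))"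

definition csmult :: "complex \<Rightarrow> complex^'n^'n \<Rightarrow> complex^'n^'n" where
  "csmult c A = (\<chi> i j. c * A $ i $ j)"

definition unitary :: "complex^'n^'n \<Rightarrow> bool" where
  "unitary A \<longleftrightarrow> adj A ** A = mat 1 \<and> A ** adj A = mat 1"

definition energy :: "nat \<Rightarrow> (nat \<Rightarrow> complex^'n^'n) \<Rightarrow> (nat \<Rightarrow> complex^'m^'m) \<Rightarrow> complex" where
  "energy N U V = 1 - (1 / of_nat N ^ 2) *
     (\<Sum>i=1..N. \<Sum>j=1..N. frob_inner (U i) (U j) * frob_inner (V i) (V j))"

end

theory Submission
  imports Defs
begin


lemma adj_nth[simp]: "adj A $ i $ j = cnj (A $ j $ i)"
  by (simp add: adj_def)
lemma csmult_nth[simp]: "csmult c A $ i $ j = c * A $ i $ j"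
  by (simp add: csmult_def)
lemma mmult_nth: "(A ** B) $ i $ j = (\<Sum>k\<in>UNIV. A $ i $ k * B $ k $ j)"
  by (simp add: matrix_matrix_mult_def)

lemma adj_adj[simp]: "adj (adj A) = A"
  by (simp add: vec_eq_iff)
lemma adj_mult: "adj (A ** B) = adj B ** adj A"
  by (simp add: vec_eq_iff mmult_nth mult.commute)
lemma adj_add: "adj (A + B) = adj A + adj B"
  by (simp add: vec_eq_iff)
lemma adj_diff: "adj (A - B) = adj A - adj B"
  by (simp add: vec_eq_iff)
lemma adj_sum: "adj (sum f S) = (\<Sum>x\<in>S. adj (f x))"
  by (induction S rule: infinite_finite_induct) (auto simp: adj_add vec_eq_iff)
lemma adj_csmult: "adj (csmult c A) = csmult (cnj c) (adj A)"
  by (simp add: vec_eq_iff)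
lemma adj_mat1[simp]: "adj (mat 1) = mat 1"
  by (simp add: vec_eq_iff mat_def)

lemma csmult_add: "csmult c (A + B) = csmult c A + csmult c B"
  by (simp add: vec_eq_iff algebra_simps)
lemma csmult_diff: "csmult c (A - B) = csmult c A - csmult c B"
  by (simp add: vec_eq_iff algebra_simps)
lemma csmult_sum: "csmult c (sum f S) = (\<Sum>x\<in>S. csmult c (f x))"
  by (induction S rule: infinite_finite_induct) (auto simp: csmult_add vec_eq_iff)
lemma csmult_of_real: "csmult (of_real r) A = r *\<^sub>R A"
  by (simp add: vec_eq_iff of_real_def)
lemma csmult_mult_left: "csmult c A ** B = csmult c (A ** B)"
  by (simp add: vec_eq_iff mmult_nth sum_distrib_left mult.assoc)
lemma csmult_mult_right: "A ** csmult c B = csmult c (A ** B)"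
  by (simp add: vec_eq_iff mmult_nth sum_distrib_left algebra_simps)
lemma mult_add_left: "(A + B) ** C = A ** C + B ** (C::'a::semiring_1^'p^'m)"
  by (simp add: vec_eq_iff mmult_nth algebra_simps sum.distrib)
lemma mult_sum_left: "sum f S ** B = (\<Sum>x\<in>S. f x ** B)"
  by (induction S rule: infinite_finite_induct) (auto simp: mult_add_left)
lemma mult_sum_right: "B ** sum f S = (\<Sum>x\<in>S. B ** f x)"
  by (induction S rule: infinite_finite_induct) (auto simp: matrix_add_ldistrib)
lemma mult_diff_left: "(A - B) ** C = A ** C - B ** (C::'a::ring_1^'n^'n)"
  by (simp add: vec_eq_iff mmult_nth algebra_simps sum_subtractf)
lemma mult_diff_right: "C ** (A - B) = C ** A - C ** (B::'a::ring_1^'n^'n)"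
  by (simp add: vec_eq_iff mmult_nth algebra_simps sum_subtractf)

lemma fi_expand: "frob_inner A B = (\<Sum>i\<in>UNIV. \<Sum>k\<in>UNIV. cnj (A $ k $ i) * B $ k $ i)"
  by (simp add: frob_inner_def mtrace_def mmult_nth)

lemma mtrace_commute: "mtrace (A ** B) = mtrace (B ** (A::complex^'n^'n))"
  unfolding mtrace_def mmult_nth by (subst sum.swap) (simp add: mult.commute)

lemma fi_add_right: "frob_inner A (B + C) = frob_inner A B + frob_inner A C"
  by (simp add: fi_expand algebra_simps sum.distrib)
lemma fi_add_left: "frob_inner (B + C) A = frob_inner B A + frob_inner C A"
  by (simp add: fi_expand algebra_simps sum.distrib)
lemma fi_diff_right: "frob_inner A (B - C) = frob_inner A B - frob_inner A C"
  by (simp add: fi_expand algebra_simps sum_subtractf)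
lemma fi_diff_left: "frob_inner (B - C) A = frob_inner B A - frob_inner C A"
  by (simp add: fi_expand algebra_simps sum_subtractf)
lemma fi_csmult_right: "frob_inner A (csmult c B) = c * frob_inner A B"
  by (simp add: fi_expand sum_distrib_left algebra_simps)
lemma fi_csmult_left: "frob_inner (csmult c A) B = cnj c * frob_inner A B"
  by (simp add: fi_expand sum_distrib_left algebra_simps)
lemma fi_scaleR_right: "frob_inner A (r *\<^sub>R B) = r *\<^sub>R frob_inner A B"
  by (simp add: fi_expand scaleR_sum_right)
lemma fi_scaleR_left: "frob_inner (r *\<^sub>R A) B = r *\<^sub>R frob_inner A B"
  by (simp add: fi_expand scaleR_sum_right)
lemma fi_zero_right[simp]: "frob_inner A 0 = 0" by (simp add: fi_expand)
lemma fi_zero_left[simp]: "frob_inner 0 A = 0" by (simp add: fi_expand)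
lemma fi_sum_right: "frob_inner A (sum f S) = (\<Sum>x\<in>S. frob_inner A (f x))"
  by (induction S rule: infinite_finite_induct) (auto simp: fi_add_right fi_zero_right)
lemma fi_sum_left: "frob_inner (sum f S) A = (\<Sum>x\<in>S. frob_inner (f x) A)"
  by (induction S rule: infinite_finite_induct) (auto simp: fi_add_left fi_zero_left)
lemma fi_cnj: "cnj (frob_inner A B) = frob_inner B A"
  by (simp add: fi_expand mult.commute)

lemma norm_sq_matrix: "norm A ^ 2 = (\<Sum>i\<in>UNIV. \<Sum>j\<in>UNIV. cmod (A $ i $ j) ^ 2)"
  by (simp add: norm_vec_def L2_set_def sum_nonneg)

lemma fi_self: "frob_inner A A = of_real (norm A ^ 2)"
proof -
  have "frob_inner A A = (\<Sum>i\<in>UNIV. \<Sum>k\<in>UNIV. of_real (cmod (A $ k $ i) ^ 2))"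
    unfolding fi_expand by (simp add: complex_norm_square mult.commute del: of_real_power)
  also have "\<dots> = of_real (\<Sum>k\<in>UNIV. \<Sum>i\<in>UNIV. cmod (A $ k $ i) ^ 2)"
    by (subst sum.swap) simp
  finally show ?thesis by (simp add: norm_sq_matrix)
qed

lemma frob_norm_eq: "frob_norm A = norm A"
  by (simp add: frob_norm_def fi_self)



lemma bilinear_fi: "bilinear frob_inner"
  unfolding bilinear_def
  by (auto intro!: linearI simp: fi_add_right fi_add_left fi_scaleR_right fi_scaleR_left)

lemma bb_fi: "bounded_bilinear frob_inner"
  by (rule bilinear_conv_bounded_bilinear[THEN iffD1, OF bilinear_fi])

lemma scaleR_mult_left: "(r *\<^sub>R A) ** B = r *\<^sub>R (A ** (B::complex^'n^'n))"
  by (simp add: vec_eq_iff mmult_nth scaleR_sum_right)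
lemma scaleR_mult_right: "A ** (r *\<^sub>R B) = r *\<^sub>R (A ** (B::complex^'n^'n))"
  by (simp add: vec_eq_iff mmult_nth scaleR_sum_right)

lemma bb_mm: "bounded_bilinear ((**) :: complex^'n^'n \<Rightarrow> complex^'n^'n \<Rightarrow> complex^'n^'n)"
proof -
  have "bilinear ((**) :: complex^'n^'n \<Rightarrow> complex^'n^'n \<Rightarrow> complex^'n^'n)"
    unfolding bilinear_def
    by (auto intro!: linearI simp: matrix_add_ldistrib mult_add_left scaleR_mult_left scaleR_mult_right)
  then show ?thesis by (rule bilinear_conv_bounded_bilinear[THEN iffD1])
qed

lemma bb_csmult: "bounded_bilinear (csmult :: complex \<Rightarrow> complex^'n^'n \<Rightarrow> complex^'n^'n)"
proof -
  have "bilinear (csmult :: complex \<Rightarrow> complex^'n^'n \<Rightarrow> complex^'n^'n)"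
    unfolding bilinear_def
    by (auto intro!: linearI simp: csmult_add vec_eq_iff algebra_simps)
  then show ?thesis by (rule bilinear_conv_bounded_bilinear[THEN iffD1])
qed

lemma bl_adj: "bounded_linear (adj :: complex^'n^'n \<Rightarrow> complex^'n^'n)"
proof -
  have "linear (adj :: complex^'n^'n \<Rightarrow> complex^'n^'n)"
    by (auto intro!: linearI simp: adj_add vec_eq_iff)
  then show ?thesis by (rule linear_conv_bounded_linear[THEN iffD1])
qed

lemma key_identity:
  fixes U W :: "complex^'n^'n"
  assumes u1: "adj U ** U = mat 1" and u2: "U ** adj U = mat 1"
  shows "2 * Re (frob_inner W (W - U ** adj W ** U)) = norm (W - U ** adj W ** U) ^ 2"
proof -
  define Y where "Y = U ** adj W ** U"
  have "adj Y = adj U ** (W ** adj U)"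
    unfolding Y_def adj_mult adj_adj ..
  then have "adj Y ** Y = adj U ** W ** (adj U ** U) ** adj W ** U"
    unfolding Y_def by (simp only: matrix_mul_assoc)
  also have "\<dots> = adj U ** ((W ** adj W) ** U)"
    unfolding u1 matrix_mul_rid by (simp only: matrix_mul_assoc)
  finally have "frob_inner Y Y = mtrace (adj U ** ((W ** adj W) ** U))"
    by (simp add: frob_inner_def)
  also have "\<dots> = mtrace (((W ** adj W) ** U) ** adj U)"
    by (rule mtrace_commute)
  also have "\<dots> = mtrace (W ** adj W)"
    by (simp only: matrix_mul_assoc[symmetric] u2 matrix_mul_rid)
  also have "\<dots> = frob_inner W W"
    by (simp add: frob_inner_def mtrace_commute)
  finally have YY: "frob_inner Y Y = frob_inner W W" .
  have "complex_of_real (norm (W - Y) ^ 2) = frob_inner (W - Y) (W - Y)"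
    by (simp add: fi_self)
  also have "\<dots> = frob_inner W W - frob_inner W Y - cnj (frob_inner W Y) + frob_inner Y Y"
    by (simp add: fi_diff_left fi_diff_right fi_cnj)
  finally have "norm (W - Y) ^ 2 = Re (frob_inner W W - frob_inner W Y - cnj (frob_inner W Y) + frob_inner Y Y)"
    by (metis Re_complex_of_real)
  then show ?thesis
    unfolding Y_def[symmetric] using YY by (simp add: fi_diff_right)
qed

lemma adj_scaleR: "adj (r *\<^sub>R A) = r *\<^sub>R adj (A::complex^'n^'n)"
  by (simp add: vec_eq_iff)

lemma Q_deriv_alg:
  fixes U W :: "complex^'n^'n"
  shows "adj U ** (c *\<^sub>R (W - U ** adj W ** U)) + adj (c *\<^sub>R (W - U ** adj W ** U)) ** U
    = - c *\<^sub>R ((adj U ** W) ** (adj U ** U - mat 1) + (adj U ** U - mat 1) ** adj (adj U ** W))"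
  by (simp add: adj_scaleR scaleR_mult_left scaleR_mult_right adj_diff adj_mult mult_diff_left
      mult_diff_right matrix_mul_assoc algebra_simps)

lemma unitary_preserved:
  fixes U W :: "real \<Rightarrow> complex^'n^'n" and c T :: real
  assumes dU: "\<And>s. 0 \<le> s \<Longrightarrow> (U has_vector_derivative (c *\<^sub>R (W s - U s ** adj (W s) ** U s))) (at s within {0..})"
    and cW: "continuous_on {0..} W" and U0: "adj (U 0) ** U 0 = mat 1" and T: "0 \<le> T"
  shows "adj (U T) ** U T = mat 1"
proof -
  define Q where "Q s = adj (U s) ** U s - mat 1" for s
  define X where "X s = adj (U s) ** W s" for s
  define Q' where "Q' s = - c *\<^sub>R (X s ** Q s + Q s ** adj (X s))" for s
  have dQ: "(Q has_vector_derivative Q' s) (at s within {0..})" if "0 \<le> s" for s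
  proof -
    have d1: "((\<lambda>s. adj (U s)) has_vector_derivative adj (c *\<^sub>R (W s - U s ** adj (W s) ** U s))) (at s within {0..})"
      by (rule bounded_linear.has_vector_derivative[OF bl_adj dU[OF that]])
    have "((\<lambda>s. adj (U s) ** U s) has_vector_derivative
        adj (U s) ** (c *\<^sub>R (W s - U s ** adj (W s) ** U s)) + adj (c *\<^sub>R (W s - U s ** adj (W s) ** U s)) ** U s)
        (at s within {0..})"
      by (rule bounded_bilinear.has_vector_derivative[OF bb_mm d1 dU[OF that]])
    then have "((\<lambda>s. adj (U s) ** U s) has_vector_derivative Q' s) (at s within {0..})"
      unfolding Q_deriv_alg Q'_def X_def Q_def .
    then show ?thesis unfolding Q_def by (rule has_vector_derivative_diff_const[THEN iffD2])
  qed
  have cU: "continuous_on {0..} U"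
    unfolding continuous_on_eq_continuous_within using has_vector_derivative_continuous[OF dU] by auto
  have cX: "continuous_on {0..T} X"
    unfolding X_def
  proof (rule bounded_bilinear.continuous_on[OF bb_mm])
    show "continuous_on {0..T} (\<lambda>s. adj (U s))"
      by (rule bounded_linear.continuous_on[OF bl_adj continuous_on_subset[OF cU]]) auto
    show "continuous_on {0..T} W"
      by (rule continuous_on_subset[OF cW]) auto
  qed
  have cmp: "compact (X ` {0..T})"
    by (rule compact_continuous_image[OF cX compact_Icc])
  obtain B where B: "B > 0" "\<And>s. s \<in> {0..T} \<Longrightarrow> norm (X s) \<le> B"
    using bounded_pos[THEN iffD1, OF compact_imp_bounded[OF cmp]] by auto
  obtain K where K: "K > 0" "\<And>(a :: complex^'n^'n) (b :: complex^'n^'n). norm (a ** b) \<le> norm a * norm b * K"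
    using bounded_bilinear.pos_bounded[OF bb_mm] by auto
  obtain K2 where K2: "K2 > 0" "\<And>a :: complex^'n^'n. norm (adj a) \<le> norm a * K2"
    using bounded_linear.pos_bounded[OF bl_adj] by auto
  define M where "M = \<bar>c\<bar> * K * B * (1 + K2)"
  have Mnn: "M \<ge> 0" unfolding M_def using K B K2 by auto
  have boundQ': "norm (Q' s) \<le> M * norm (Q s)" if "s \<in> {0..T}" for s
  proof -
    have "norm (X s ** Q s) \<le> norm (X s) * norm (Q s) * K" by (rule K)
    also have "\<dots> \<le> B * norm (Q s) * K" using B(2)[OF that] K by (simp add: mult_right_mono)
    finally have 1: "norm (X s ** Q s) \<le> B * norm (Q s) * K" .
    have "norm (Q s ** adj (X s)) \<le> norm (Q s) * norm (adj (X s)) * K" by (rule K)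
    also have "\<dots> \<le> norm (Q s) * (B * K2) * K"
    proof -
      have "norm (adj (X s)) \<le> B * K2"
        using K2(2)[of "X s"] mult_right_mono[OF B(2)[OF that] less_imp_le[OF K2(1)]] by linarith
      then show ?thesis using K by (simp add: mult_left_mono mult_right_mono)
    qed
    finally have 2: "norm (Q s ** adj (X s)) \<le> norm (Q s) * (B * K2) * K" .
    have "norm (Q' s) = \<bar>c\<bar> * norm (X s ** Q s + Q s ** adj (X s))"
      unfolding Q'_def by simp
    also have "\<dots> \<le> \<bar>c\<bar> * (norm (X s ** Q s) + norm (Q s ** adj (X s)))"
      by (simp add: mult_left_mono norm_triangle_ineq)
    also have "\<dots> \<le> \<bar>c\<bar> * (B * norm (Q s) * K + norm (Q s) * (B * K2) * K)"
      using 1 2 by (simp add: mult_left_mono add_mono)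
    also have "\<dots> = M * norm (Q s)" unfolding M_def by (simp add: algebra_simps)
    finally show ?thesis .
  qed
  define f where "f s = inner (Q s) (Q s) * exp (- (2 * M) * s)" for s
  define f' where "f' s = (inner (Q s) (Q' s) + inner (Q' s) (Q s)) * exp (- (2 * M) * s)
      + (exp (- (2 * M) * s) * (- (2 * M))) * inner (Q s) (Q s)" for s
  have df: "(f has_field_derivative f' s) (at s within {0..T})" if "s \<in> {0..T}" for s
  proof -
    have s0: "0 \<le> s" using that by auto
    have "((\<lambda>s. inner (Q s) (Q s)) has_vector_derivative inner (Q s) (Q' s) + inner (Q' s) (Q s)) (at s within {0..})"
      by (rule bounded_bilinear.has_vector_derivative[OF bounded_bilinear_inner dQ[OF s0] dQ[OF s0]])
    then have "((\<lambda>s. inner (Q s) (Q s)) has_vector_derivative inner (Q s) (Q' s) + inner (Q' s) (Q s)) (at s within {0..T})"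
      by (rule has_vector_derivative_within_subset) auto
    then have i: "((\<lambda>s. inner (Q s) (Q s)) has_field_derivative inner (Q s) (Q' s) + inner (Q' s) (Q s)) (at s within {0..T})"
      by (simp add: has_real_derivative_iff_has_vector_derivative)
    have e: "((\<lambda>s. exp (- (2 * M) * s)) has_field_derivative exp (- (2 * M) * s) * (- (2 * M))) (at s within {0..T})"
      by (auto intro!: derivative_eq_intros)
    show ?thesis
      unfolding f_def f'_def by (rule DERIV_mult[OF i e])
  qed
  have f'nonpos: "f' s \<le> 0" if "s \<in> {0..T}" for s
  proof -
    have "inner (Q s) (Q' s) \<le> norm (Q s) * norm (Q' s)" by (rule norm_cauchy_schwarz)
    also have "\<dots> \<le> norm (Q s) * (M * norm (Q s))" by (rule mult_left_mono[OF boundQ'[OF that]]) simp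
    finally have "inner (Q s) (Q' s) \<le> M * inner (Q s) (Q s)"
      by (simp add: power2_eq_square algebra_simps flip: power2_norm_eq_inner)
    then have "inner (Q s) (Q' s) + inner (Q' s) (Q s) - 2 * M * inner (Q s) (Q s) \<le> 0"
      by (simp add: inner_commute)
    then have "(inner (Q s) (Q' s) + inner (Q' s) (Q s) - 2 * M * inner (Q s) (Q s)) * exp (- (2 * M) * s) \<le> 0"
      by (simp add: mult_nonpos_nonneg)
    then show ?thesis unfolding f'_def by (simp add: algebra_simps)
  qed
  have "\<exists>x\<in>{0..T}. f T - f 0 = (\<lambda>h. f' x * h) (T - 0)"
  proof (rule mvt_very_simple[OF T, of f "\<lambda>x h. f' x * h"])
    fix x assume "0 \<le> x" "x \<le> T"
    then have "(f has_field_derivative f' x) (at x within {0..T})" using df by auto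
    then show "(f has_derivative (\<lambda>h. f' x * h)) (at x within {0..T})"
      by (simp add: has_field_derivative_def)
  qed
  then obtain x where x: "x \<in> {0..T}" "f T - f 0 = f' x * (T - 0)" by auto
  have "f 0 = 0" unfolding f_def Q_def using U0 by simp
  then have "f T \<le> 0" using x f'nonpos[OF x(1)] T by (simp add: mult_nonpos_nonneg)
  then have "inner (Q T) (Q T) \<le> 0" unfolding f_def
    by (simp add: mult_le_0_iff)
  then have "inner (Q T) (Q T) = 0" using inner_ge_zero[of "Q T"] by linarith
  then have "Q T = 0" by simp
  then show ?thesis unfolding Q_def by simp
qed

lemma reform:
  fixes A :: "complex^'n^'n" and B :: "nat \<Rightarrow> complex^'n^'n"
  shows "csmult (of_real c) (\<Sum>k\<in>S. csmult (a k) (B k) - csmult (cnj (a k)) (A ** adj (B k) ** A))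
    = c *\<^sub>R ((\<Sum>k\<in>S. csmult (a k) (B k)) - A ** adj (\<Sum>k\<in>S. csmult (a k) (B k)) ** A)"
  by (simp add: csmult_of_real sum_subtractf adj_sum adj_csmult mult_sum_right mult_sum_left
      csmult_mult_left csmult_mult_right)

lemma sum_part:
  fixes A A' :: "nat \<Rightarrow> complex^'n^'n" and a :: "nat \<Rightarrow> nat \<Rightarrow> complex"
  assumes herm: "\<And>i j. a j i = cnj (a i j)"
  shows "(\<Sum>i\<in>S. \<Sum>j\<in>S. (frob_inner (A i) (A' j) + frob_inner (A' i) (A j)) * a i j)
    = of_real (\<Sum>j\<in>S. 2 * Re (frob_inner (\<Sum>k\<in>S. csmult (a j k) (A k)) (A' j)))"
proof -
  define z where "z = (\<Sum>i\<in>S. \<Sum>j\<in>S. frob_inner (A i) (A' j) * a i j)"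
  have L1: "z = (\<Sum>j\<in>S. frob_inner (\<Sum>k\<in>S. csmult (a j k) (A k)) (A' j))"
  proof -
    have "(\<Sum>j\<in>S. frob_inner (\<Sum>k\<in>S. csmult (a j k) (A k)) (A' j))
        = (\<Sum>j\<in>S. \<Sum>k\<in>S. frob_inner (A k) (A' j) * a k j)"
      by (simp add: fi_sum_left fi_csmult_left herm[symmetric] mult.commute)
    also have "\<dots> = z" unfolding z_def by (rule sum.swap)
    finally show ?thesis by simp
  qed
  have L2: "(\<Sum>i\<in>S. \<Sum>j\<in>S. frob_inner (A' i) (A j) * a i j) = cnj z"
  proof -
    have "cnj z = (\<Sum>i\<in>S. \<Sum>j\<in>S. frob_inner (A' j) (A i) * a j i)"
      unfolding z_def by (simp add: fi_cnj herm[symmetric])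
    also have "\<dots> = (\<Sum>i\<in>S. \<Sum>j\<in>S. frob_inner (A' i) (A j) * a i j)"
      by (rule sum.swap)
    finally show ?thesis by simp
  qed
  have "(\<Sum>i\<in>S. \<Sum>j\<in>S. (frob_inner (A i) (A' j) + frob_inner (A' i) (A j)) * a i j) = z + cnj z"
    using L2 unfolding z_def by (simp add: distrib_right sum.distrib)
  also have "\<dots> = of_real (2 * Re z)" by (simp add: complex_add_cnj)
  also have "\<dots> = of_real (\<Sum>j\<in>S. 2 * Re (frob_inner (\<Sum>k\<in>S. csmult (a j k) (A k)) (A' j)))"
    unfolding L1 by (simp add: sum_distrib_left)
  finally show ?thesis .
qed

lemma per_j:
  fixes A W :: "complex^'n^'n" and c :: real
  assumes "adj A ** A = mat 1" and "c > 0"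
  shows "2 * Re (frob_inner W (c *\<^sub>R (W - A ** adj W ** A))) = norm (c *\<^sub>R (W - A ** adj W ** A)) ^ 2 / c"
proof -
  have u2: "A ** adj A = mat 1" using assms(1) matrix_left_right_inverse by blast
  have "2 * Re (frob_inner W (c *\<^sub>R (W - A ** adj W ** A))) = c * (2 * Re (frob_inner W (W - A ** adj W ** A)))"
    by (simp add: fi_scaleR_right)
  also have "\<dots> = c * norm (W - A ** adj W ** A) ^ 2"
    using key_identity[OF assms(1) u2] by simp
  also have "\<dots> = norm (c *\<^sub>R (W - A ** adj W ** A)) ^ 2 / c"
    using assms(2) by (simp only: norm_scaleR abs_of_pos power_mult_distrib) (simp add: power2_eq_square)
  finally show ?thesis .
qed

theorem mainTheorem12:
  fixes N :: nat and \<kappa> :: real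
    and U :: "nat \<Rightarrow> real \<Rightarrow> complex^'n^'n" and V :: "nat \<Rightarrow> real \<Rightarrow> complex^'m^'m"
    and U' :: "nat \<Rightarrow> real \<Rightarrow> complex^'n^'n" and V' :: "nat \<Rightarrow> real \<Rightarrow> complex^'m^'m"
  assumes N: "N \<ge> 1" and kappa: "\<kappa> > 0"
    and dU: "\<And>j s. j \<in> {1..N} \<Longrightarrow> s \<ge> 0 \<Longrightarrow> ((U j) has_vector_derivative U' j s) (at s within {0..})"
    and dV: "\<And>j s. j \<in> {1..N} \<Longrightarrow> s \<ge> 0 \<Longrightarrow> ((V j) has_vector_derivative V' j s) (at s within {0..})"
    and eqU: "\<And>j s. j \<in> {1..N} \<Longrightarrow> s \<ge> 0 \<Longrightarrow> U' j s =
        csmult (of_real (\<kappa> / real N))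
          (\<Sum>k=1..N. csmult (frob_inner (V j s) (V k s)) (U k s)
                    - csmult (frob_inner (V k s) (V j s)) (U j s ** adj (U k s) ** U j s))"
    and eqV: "\<And>j s. j \<in> {1..N} \<Longrightarrow> s \<ge> 0 \<Longrightarrow> V' j s =
        csmult (of_real (\<kappa> / real N))
          (\<Sum>k=1..N. csmult (frob_inner (U j s) (U k s)) (V k s)
                    - csmult (frob_inner (U k s) (U j s)) (V j s ** adj (V k s) ** V j s))"
    and init: "\<And>j. j \<in> {1..N} \<Longrightarrow> unitary (U j 0) \<and> unitary (V j 0)"
    and t: "t > 0"
  shows "((\<lambda>s. energy N (\<lambda>i. U i s) (\<lambda>i. V i s)) has_vector_derivative
          of_real (- (1 / (\<kappa> * real N)) *
             (\<Sum>j=1..N. frob_norm (U' j t) ^ 2 + frob_norm (V' j t) ^ 2))) (at t)"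
proof -
  define c where "c = \<kappa> / real N"
  have c0: "c > 0" using N kappa unfolding c_def by auto
  define a where "a s i j = frob_inner (V i s) (V j s)" for s i j
  define b where "b s i j = frob_inner (U i s) (U j s)" for s i j
  define WU where "WU j s = (\<Sum>k\<in>{1..N}. csmult (a s j k) (U k s))" for j s
  define WV where "WV j s = (\<Sum>k\<in>{1..N}. csmult (b s j k) (V k s))" for j s
  have ha: "a s j i = cnj (a s i j)" for s i j unfolding a_def by (simp add: fi_cnj)
  have hb: "b s j i = cnj (b s i j)" for s i j unfolding b_def by (simp add: fi_cnj)
  have U'eq: "U' j s = c *\<^sub>R (WU j s - U j s ** adj (WU j s) ** U j s)" if "j \<in> {1..N}" "s \<ge> 0" for j s
  proof -
    have "U' j s = csmult (of_real c) (\<Sum>k\<in>{1..N}. csmult (a s j k) (U k s)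
        - csmult (cnj (a s j k)) (U j s ** adj (U k s) ** U j s))"
      unfolding eqU[OF that] c_def ha[symmetric] unfolding a_def ..
    then show ?thesis unfolding reform WU_def .
  qed
  have V'eq: "V' j s = c *\<^sub>R (WV j s - V j s ** adj (WV j s) ** V j s)" if "j \<in> {1..N}" "s \<ge> 0" for j s
  proof -
    have "V' j s = csmult (of_real c) (\<Sum>k\<in>{1..N}. csmult (b s j k) (V k s)
        - csmult (cnj (b s j k)) (V j s ** adj (V k s) ** V j s))"
      unfolding eqV[OF that] c_def hb[symmetric] unfolding b_def ..
    then show ?thesis unfolding reform WV_def .
  qed
  have cU: "continuous_on {0..} (U j)" if "j \<in> {1..N}" for j
    unfolding continuous_on_eq_continuous_within using has_vector_derivative_continuous[OF dU[OF that]] by auto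
  have cV: "continuous_on {0..} (V j)" if "j \<in> {1..N}" for j
    unfolding continuous_on_eq_continuous_within using has_vector_derivative_continuous[OF dV[OF that]] by auto
  have cWU: "continuous_on {0..} (WU j)" if "j \<in> {1..N}" for j
    unfolding WU_def a_def
  proof (rule continuous_on_sum)
    fix k assume k: "k \<in> {1..N}"
    have "continuous_on {0..} (\<lambda>s. frob_inner (V j s) (V k s))"
      by (rule bounded_bilinear.continuous_on[OF bb_fi cV[OF that] cV[OF k]])
    then show "continuous_on {0..} (\<lambda>s. csmult (frob_inner (V j s) (V k s)) (U k s))"
      by (rule bounded_bilinear.continuous_on[OF bb_csmult _ cU[OF k]])
  qed
  have cWV: "continuous_on {0..} (WV j)" if "j \<in> {1..N}" for j
    unfolding WV_def b_def
  proof (rule continuous_on_sum)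
    fix k assume k: "k \<in> {1..N}"
    have "continuous_on {0..} (\<lambda>s. frob_inner (U j s) (U k s))"
      by (rule bounded_bilinear.continuous_on[OF bb_fi cU[OF that] cU[OF k]])
    then show "continuous_on {0..} (\<lambda>s. csmult (frob_inner (U j s) (U k s)) (V k s))"
      by (rule bounded_bilinear.continuous_on[OF bb_csmult _ cV[OF k]])
  qed
  have uU: "adj (U j t) ** U j t = mat 1" if "j \<in> {1..N}" for j
  proof (rule unitary_preserved[where W = "WU j" and c = c])
    show "(U j has_vector_derivative c *\<^sub>R (WU j s - U j s ** adj (WU j s) ** U j s)) (at s within {0..})"
      if "0 \<le> s" for s
      using dU[OF \<open>j \<in> {1..N}\<close> that] U'eq[OF \<open>j \<in> {1..N}\<close> that] by simp
    show "continuous_on {0..} (WU j)" by (rule cWU[OF that])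
    show "adj (U j 0) ** U j 0 = mat 1" using init[OF that] unfolding unitary_def by simp
    show "0 \<le> t" using t by simp
  qed
  have uV: "adj (V j t) ** V j t = mat 1" if "j \<in> {1..N}" for j
  proof (rule unitary_preserved[where W = "WV j" and c = c])
    show "(V j has_vector_derivative c *\<^sub>R (WV j s - V j s ** adj (WV j s) ** V j s)) (at s within {0..})"
      if "0 \<le> s" for s
      using dV[OF \<open>j \<in> {1..N}\<close> that] V'eq[OF \<open>j \<in> {1..N}\<close> that] by simp
    show "continuous_on {0..} (WV j)" by (rule cWV[OF that])
    show "adj (V j 0) ** V j 0 = mat 1" using init[OF that] unfolding unitary_def by simp
    show "0 \<le> t" using t by simp
  qed
  define G where "G s = (\<Sum>i=1..N. \<Sum>j=1..N. frob_inner (U i s) (U j s) * frob_inner (V i s) (V j s))" for s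
  define G' where "G' = (\<Sum>i=1..N. \<Sum>j=1..N.
     frob_inner (U i t) (U j t) * (frob_inner (V i t) (V' j t) + frob_inner (V' i t) (V j t))
     + (frob_inner (U i t) (U' j t) + frob_inner (U' i t) (U j t)) * frob_inner (V i t) (V j t))"
  have t0: "0 \<le> t" using t by simp
  have dG: "(G has_vector_derivative G') (at t within {0..})"
    unfolding G_def G'_def
  proof (intro has_vector_derivative_sum)
    fix i j assume i: "i \<in> {1..N}" and j: "j \<in> {1..N}"
    show "((\<lambda>s. frob_inner (U i s) (U j s) * frob_inner (V i s) (V j s)) has_vector_derivative
     frob_inner (U i t) (U j t) * (frob_inner (V i t) (V' j t) + frob_inner (V' i t) (V j t))
     + (frob_inner (U i t) (U' j t) + frob_inner (U' i t) (U j t)) * frob_inner (V i t) (V j t)) (at t within {0..})"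
      by (rule bounded_bilinear.has_vector_derivative[OF bounded_bilinear_mult
            bounded_bilinear.has_vector_derivative[OF bb_fi dU[OF i t0] dU[OF j t0]]
            bounded_bilinear.has_vector_derivative[OF bb_fi dV[OF i t0] dV[OF j t0]]])
  qed
  have dE: "((\<lambda>s. energy N (\<lambda>i. U i s) (\<lambda>i. V i s)) has_vector_derivative 0 - (1 / of_nat N ^ 2) * G') (at t within {0..})"
    unfolding energy_def G_def[symmetric]
    by (rule has_vector_derivative_diff[OF has_vector_derivative_const
          bounded_linear.has_vector_derivative[OF bounded_linear_mult_right dG]])
  have att: "at t within {0..} = at t"
    using t by (intro at_within_interior) simp
  have G'eq: "G' = of_real (\<Sum>j=1..N. (norm (U' j t) ^ 2 + norm (V' j t) ^ 2) / c)"
  proof -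
    have "G' = (\<Sum>i=1..N. \<Sum>j=1..N. (frob_inner (U i t) (U' j t) + frob_inner (U' i t) (U j t)) * a t i j)
        + (\<Sum>i=1..N. \<Sum>j=1..N. (frob_inner (V i t) (V' j t) + frob_inner (V' i t) (V j t)) * b t i j)"
      unfolding G'_def a_def b_def by (simp add: sum.distrib algebra_simps)
    also have "\<dots> = of_real (\<Sum>j=1..N. 2 * Re (frob_inner (WU j t) (U' j t)))
        + of_real (\<Sum>j=1..N. 2 * Re (frob_inner (WV j t) (V' j t)))"
      unfolding WU_def WV_def by (simp only: sum_part[of "a t", OF ha] sum_part[of "b t", OF hb])
    also have "\<dots> = of_real (\<Sum>j=1..N. norm (U' j t) ^ 2 / c) + of_real (\<Sum>j=1..N. norm (V' j t) ^ 2 / c)"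
    proof -
      have "(\<Sum>j=1..N. 2 * Re (frob_inner (WU j t) (U' j t))) = (\<Sum>j=1..N. norm (U' j t) ^ 2 / c)"
      proof (rule sum.cong[OF refl])
        fix j assume j: "j \<in> {1..N}"
        show "2 * Re (frob_inner (WU j t) (U' j t)) = norm (U' j t) ^ 2 / c"
          unfolding U'eq[OF j t0] by (rule per_j[OF uU[OF j] c0])
      qed
      moreover have "(\<Sum>j=1..N. 2 * Re (frob_inner (WV j t) (V' j t))) = (\<Sum>j=1..N. norm (V' j t) ^ 2 / c)"
      proof (rule sum.cong[OF refl])
        fix j assume j: "j \<in> {1..N}"
        show "2 * Re (frob_inner (WV j t) (V' j t)) = norm (V' j t) ^ 2 / c"
          unfolding V'eq[OF j t0] by (rule per_j[OF uV[OF j] c0])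
      qed
      ultimately show ?thesis by simp
    qed
    also have "\<dots> = of_real (\<Sum>j=1..N. (norm (U' j t) ^ 2 + norm (V' j t) ^ 2) / c)"
      by (simp add: sum.distrib add_divide_distrib)
    finally show ?thesis .
  qed
  have final: "0 - (1 / of_nat N ^ 2) * G' = complex_of_real (- (1 / (\<kappa> * real N)) *
             (\<Sum>j=1..N. frob_norm (U' j t) ^ 2 + frob_norm (V' j t) ^ 2))"
  proof -
    define Y where "Y = (\<Sum>j=1..N. norm (U' j t) ^ 2 + norm (V' j t) ^ 2)"
    have X: "(\<Sum>j=1..N. (norm (U' j t) ^ 2 + norm (V' j t) ^ 2) / c) = Y / c"
      unfolding Y_def by (rule sum_divide_distrib[symmetric])
    have Nz: "real N > 0" using N by simp
    have R: "(1 / real N ^ 2) * (Y / c) = (1 / (\<kappa> * real N)) * Y"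
      unfolding c_def using Nz kappa by (simp add: field_simps power2_eq_square)
    have "0 - (1 / of_nat N ^ 2) * G' = - complex_of_real ((1 / real N ^ 2) * (Y / c))"
      unfolding G'eq X by simp
    also have "\<dots> = complex_of_real (- (1 / (\<kappa> * real N)) * Y)"
      unfolding R by simp
    finally show ?thesis unfolding frob_norm_eq Y_def .
  qed
  show ?thesis
    using dE unfolding att final .
qed

end
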